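(* Let $a,b\geq 1$ be integers. Let $x\in\Lambda^{a+b}$ satisfy $x_1+\cdots+x_{a+b}>b\,x_{a+b}$ and $x_{a+b}\geq 2x_a$. Then $y=T_{a,b}(x)$ satisfies $y_1+\cdots+y_{a+b}>b\,y_{a+b}$.
   Context: For $n\geq 1$ let $\Lambda^n=\{x\in\mathbb{R}^n : 0\leq x_1\leq\cdots\leq x_n\}$. For integers $a,b\geq 1$ the map $T_{a,b}:\Lambda^{a+b}\to\Lambda^{a+b}$ sends $x$ to the vector obtained by arranging $x_1,\ldots,x_a,\,x_{a+1}-x_a,\ldots,x_{a+b}-x_a$ in nondecreasing order. *)

theory Defs
  imports Main "HOL.Real"
begin

text \<open>Vectors in R^n are real lists of length n; entry x_i is x ! (i-1).\<close>

definition Lambda :: "nat \<Rightarrow> real list set" where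
  "Lambda n = {x. length x = n \<and> (\<forall>i<n. 0 \<le> x ! i) \<and> sorted x}"

definition T :: "nat \<Rightarrow> nat \<Rightarrow> real list \<Rightarrow> real list" where
  "T a b x = sort (take a x @ map (\<lambda>t. t - x ! (a - 1)) (take b (drop a x)))"

end

theory Submission
  imports Defs "HOL-Library.Multiset"
begin

theorem lemma5p1:
  fixes a b :: nat and x :: "real list"
  assumes "a \<ge> 1" and "b \<ge> 1"
    and "x \<in> Lambda (a + b)"
    and "sum_list x > real b * x ! (a + b - 1)"
    and "x ! (a + b - 1) \<ge> 2 * x ! (a - 1)"
  shows "sum_list (T a b x) > real b * (T a b x) ! (a + b - 1)"
proof -
  define m where "m = x ! (a - 1)"
  define M where "M = x ! (a + b - 1)"
  define L where "L = take a x @ map (\<lambda>t. t - m) (take b (drop a x))"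
  have len: "length x = a + b" and srt: "sorted x" and nn: "\<forall>i<a+b. 0 \<le> x ! i"
    using assms(3) by (auto simp: Lambda_def)
  have TL: "T a b x = sort L" by (simp add: T_def L_def m_def)
  have lenL: "length L = a + b" using len by (simp add: L_def)
  have "sum_list L = sum_list (take a x) + (sum_list (take b (drop a x)) - real b * m)"
    using len by (simp add: L_def sum_list_subtractf sum_list_triv)
  also have "sum_list (take b (drop a x)) = sum_list (drop a x)" using len by simp
  also have "sum_list (take a x) + (sum_list (drop a x) - real b * m) = sum_list x - real b * m"
    by (metis add_diff_eq append_take_drop_id sum_list_append)
  finally have sumL: "sum_list L = sum_list x - real b * m" .
  have m0: "0 \<le> m" using nn assms(1) by (simp add: m_def)
  have bound: "\<forall>t\<in>set L. t \<le> M - m"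
  proof
    fix t assume "t \<in> set L"
    then consider "t \<in> set (take a x)" | s where "s \<in> set (take b (drop a x))" "t = s - m"
      by (auto simp: L_def)
    then show "t \<le> M - m"
    proof cases
      case 1
      then obtain i where i: "i < a" "t = x ! i" using len
        by (auto simp: in_set_conv_nth)
      have "x ! i \<le> x ! (a - 1)" using srt i len by (intro sorted_nth_mono) auto
      then show ?thesis using i assms(5) m_def M_def by linarith
    next
      case 2
      then obtain i where i: "i < b" "s = x ! (a + i)" using len
        by (auto simp: in_set_conv_nth)
      have "x ! (a + i) \<le> x ! (a + b - 1)" using srt i len by (intro sorted_nth_mono) auto
      then show ?thesis using i 2 M_def by linarith
    qed
  qed
  have "sort L ! (a + b - 1) \<in> set (sort L)" using lenL assms(1)
    by (intro nth_mem) simp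
  hence "sort L ! (a + b - 1) \<le> M - m" using bound by simp
  hence "real b * sort L ! (a + b - 1) \<le> real b * (M - m)"
    by (intro mult_left_mono) auto
  moreover have "sum_list (sort L) = sum_list L" by (metis mset_sort sum_mset_sum_list)
  ultimately show ?thesis using TL sumL assms(4) M_def
    by (simp add: algebra_simps)
qed

end
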